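(* Let $p\ge1$ and let $m(z,w)$, $m'(z,w)$ be monomials (coefficient 1) of degree $p$ in $z_i,\bar z_i,w_j,\bar w_j$ such that $\bar z_1m$ and $\bar w_1m'$ are invariant under all translations $T_{a,b}$. Put $f(z,w)=m(z,w)+m(\gamma_3(z,w))$ and $h(z,w)=m'(z,w)$. Then there exists a single function $P:A(\kappa)^{p+1}\to\mathbb C$ which is $O(2)$-invariant ($P(\gamma k,\gamma k_1,\dots,\gamma k_p)=P(k,k_1,\dots,k_p)$ for all $\gamma\in O(2)$) and satisfies $P(k,k_1,\dots,k_p)=0$ whenever $k\ne k_1+\dots+k_p$, such that for all $(z,w)$ $$f(z,w)=\sum_{k_1,\dots,k_p\in\tilde A}a(k_1)\cdots a(k_p)P(q_1,k_1,\dots,k_p),\qquad h(z,w)=\sum_{k_1,\dots,k_p\in\tilde A}a(k_1)\cdots a(k_p)P(p_1,k_1,\dots,k_p),$$ if and only if $f(z_1,z_2,0,w_2,w_3,0)=h(w_2,w_3,z_1,0,0,\bar z_2)$ for all $z_1,z_2,w_2,w_3$.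
   Context: Integers $l_1>l_2>n_2>0$ with $\kappa^2=l_1^2=l_2^2+n_2^2$; $A(\kappa)=\{k\in\mathbb R^2:|k|=\kappa\}$. Wave vectors $q_1=(l_1,0)$, $q_2=(0,l_1)$, $p_1=(l_2,n_2)$, $p_2=(l_2,-n_2)$, $p_3=(n_2,l_2)$, $p_4=(n_2,-l_2)$, $\tilde A=\{\pm q_i,\pm p_j\}$. For $(z,w)=(z_1,z_2,w_1,\dots,w_4)\in\mathbb C^6$, $a:\tilde A\to\mathbb C$ is defined by $a(q_i)=z_i$, $a(-q_i)=\bar z_i$, $a(p_j)=w_j$, $a(-p_j)=\bar w_j$. Translations: $T_{a,b}(z,w)=(e^{-il_1a}z_1,e^{-il_1b}z_2,e^{-i(l_2a+n_2b)}w_1,e^{-i(l_2a-n_2b)}w_2,e^{-i(n_2a+l_2b)}w_3,e^{-i(n_2a-l_2b)}w_4)$. $\gamma_3(z,w)=(z_1,\bar z_2,w_2,w_1,w_4,w_3)$. *)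

theory Defs
  imports "HOL-Analysis.Analysis"
begin

(* A point (z,w) = (z1,z2,w1,w2,w3,w4) of C^6 is represented by a function
   x :: nat => complex with x 0 = z1, x 1 = z2, x 2 = w1, ..., x 5 = w4
   (coordinates >= 6 are irrelevant junk). *)

definition mk6 :: "complex \<Rightarrow> complex \<Rightarrow> complex \<Rightarrow> complex \<Rightarrow> complex \<Rightarrow> complex \<Rightarrow> (nat \<Rightarrow> complex)" where
  "mk6 c0 c1 c2 c3 c4 c5 = (\<lambda>j. if j = 0 then c0 else if j = 1 then c1 else if j = 2 then c2
      else if j = 3 then c3 else if j = 4 then c4 else c5)"

definition vq1 :: "int \<Rightarrow> real^2" where "vq1 l1 = vector [of_int l1, 0]"
definition vq2 :: "int \<Rightarrow> real^2" where "vq2 l1 = vector [0, of_int l1]"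
definition vp1 :: "int \<Rightarrow> int \<Rightarrow> real^2" where "vp1 l2 n2 = vector [of_int l2, of_int n2]"
definition vp2 :: "int \<Rightarrow> int \<Rightarrow> real^2" where "vp2 l2 n2 = vector [of_int l2, - of_int n2]"
definition vp3 :: "int \<Rightarrow> int \<Rightarrow> real^2" where "vp3 l2 n2 = vector [of_int n2, of_int l2]"
definition vp4 :: "int \<Rightarrow> int \<Rightarrow> real^2" where "vp4 l2 n2 = vector [of_int n2, - of_int l2]"

definition circleA :: "real \<Rightarrow> (real^2) set" where
  "circleA \<kappa> = {k. norm k = \<kappa>}"

definition Atil :: "int \<Rightarrow> int \<Rightarrow> int \<Rightarrow> (real^2) set" where
  "Atil l1 l2 n2 = {vq1 l1, - vq1 l1, vq2 l1, - vq2 l1,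
                    vp1 l2 n2, - vp1 l2 n2, vp2 l2 n2, - vp2 l2 n2,
                    vp3 l2 n2, - vp3 l2 n2, vp4 l2 n2, - vp4 l2 n2}"

definition acoef :: "int \<Rightarrow> int \<Rightarrow> int \<Rightarrow> (nat \<Rightarrow> complex) \<Rightarrow> real^2 \<Rightarrow> complex" where
  "acoef l1 l2 n2 x k =
     (if k = vq1 l1 then x 0 else if k = - vq1 l1 then cnj (x 0)
      else if k = vq2 l1 then x 1 else if k = - vq2 l1 then cnj (x 1)
      else if k = vp1 l2 n2 then x 2 else if k = - vp1 l2 n2 then cnj (x 2)
      else if k = vp2 l2 n2 then x 3 else if k = - vp2 l2 n2 then cnj (x 3)
      else if k = vp3 l2 n2 then x 4 else if k = - vp3 l2 n2 then cnj (x 4)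
      else if k = vp4 l2 n2 then x 5 else if k = - vp4 l2 n2 then cnj (x 5)
      else 0)"

definition Ttr :: "int \<Rightarrow> int \<Rightarrow> int \<Rightarrow> real \<Rightarrow> real \<Rightarrow> (nat \<Rightarrow> complex) \<Rightarrow> (nat \<Rightarrow> complex)" where
  "Ttr l1 l2 n2 a b x = mk6
     (exp (- \<i> * of_real (of_int l1 * a)) * x 0)
     (exp (- \<i> * of_real (of_int l1 * b)) * x 1)
     (exp (- \<i> * of_real (of_int l2 * a + of_int n2 * b)) * x 2)
     (exp (- \<i> * of_real (of_int l2 * a - of_int n2 * b)) * x 3)
     (exp (- \<i> * of_real (of_int n2 * a + of_int l2 * b)) * x 4)
     (exp (- \<i> * of_real (of_int n2 * a - of_int l2 * b)) * x 5)"

definition gamma3 :: "(nat \<Rightarrow> complex) \<Rightarrow> (nat \<Rightarrow> complex)" where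
  "gamma3 x = mk6 (x 0) (cnj (x 1)) (x 3) (x 2) (x 5) (x 4)"

definition mono :: "(nat \<Rightarrow> nat) \<Rightarrow> (nat \<Rightarrow> nat) \<Rightarrow> (nat \<Rightarrow> complex) \<Rightarrow> complex" where
  "mono e ec x = (\<Prod>j<6. x j ^ e j * cnj (x j) ^ ec j)"

definition mdeg :: "(nat \<Rightarrow> nat) \<Rightarrow> (nat \<Rightarrow> nat) \<Rightarrow> nat" where
  "mdeg e ec = (\<Sum>j<6. e j + ec j)"

end

theory Submission
  imports Defs "HOL-Computational_Algebra.Primes"
begin


lemma no_sq_nat: fixes q :: nat assumes q: "prime q" shows "b > 0 \<Longrightarrow> a^2 \<noteq> q * b^2"
proof (induction b arbitrary: a rule: less_induct)
  case (less b)
  show ?case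
  proof
    assume eq: "a^2 = q * b^2"
    have "q dvd a^2" using eq by simp
    then have "q dvd a" using q prime_dvd_power by blast
    then obtain k where k: "a = q * k" by blast
    have q1: "q > 1" using q prime_gt_1_nat by blast
    have "q * b^2 = q^2 * k^2" using eq k by (simp add: power_mult_distrib)
    then have e2: "b^2 = q * k^2" using q1 by (simp add: power2_eq_square)
    then have "q dvd b" using q prime_dvd_power by (metis dvd_triv_left)
    then obtain b' where b': "b = q * b'" by blast
    have "b' > 0" using less.prems b' by simp
    have "b' < b" using b' q1 \<open>b' > 0\<close> by simp
    have "q^2 * b'^2 = q * k^2" using e2 b' by (simp add: power_mult_distrib)
    then have "k^2 = q * b'^2" using q1 by (simp add: power2_eq_square)
    then show False using less.IH[OF \<open>b' < b\<close> \<open>b' > 0\<close>] by simp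
  qed
qed

lemma no_sq_int: fixes a b :: int assumes "b \<noteq> 0" "prime (q::nat)" shows "a^2 \<noteq> int q * b^2"
proof
  assume "a^2 = int q * b^2"
  then have "int (nat \<bar>a\<bar> ^2) = int (q * nat \<bar>b\<bar>^2)" by simp
  then have "nat \<bar>a\<bar> ^2 = q * nat \<bar>b\<bar>^2" using of_nat_eq_iff by blast
  then show False using no_sq_nat[OF assms(2)] assms(1) by simp
qed

lemma no2: fixes a b :: int shows "b \<noteq> 0 \<Longrightarrow> a^2 \<noteq> 2 * b^2"
  using no_sq_int[of b 2 a] by simp
lemma no3: fixes a b :: int shows "b \<noteq> 0 \<Longrightarrow> a^2 \<noteq> 3 * b^2"
proof -
  have e: "{2..<3::nat} = {2}" by auto
  have "prime (3::nat)" unfolding prime_nat_iff' e by simp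
  then show "b \<noteq> 0 \<Longrightarrow> a^2 \<noteq> 3 * b^2" using no_sq_int[of b 3 a] by simp
qed


definition mkv :: "real \<Rightarrow> real \<Rightarrow> real^2" where "mkv x y = vector [x, y]"

lemma mkv_comp [simp]: "mkv x y $ 1 = x" "mkv x y $ 2 = y"
  by (simp_all add: mkv_def)

lemma vec2_eq_iff: "(v::real^2) = w \<longleftrightarrow> v$1 = w$1 \<and> v$2 = w$2"
  by (simp add: vec_eq_iff forall_2)

lemma mkv_eq [simp]: "mkv a b = mkv c d \<longleftrightarrow> a = c \<and> b = d"
  by (simp add: vec2_eq_iff)

lemma mkv_ops [simp]: "- mkv a b = mkv (-a) (-b)" "mkv a b + mkv c d = mkv (a+c) (b+d)"
  "r *\<^sub>R mkv a b = mkv (r*a) (r*b)" "mkv a b - mkv c d = mkv (a-c) (b-d)"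
  by (simp_all add: vec2_eq_iff)

lemma mkv_zero: "(0::real^2) = mkv 0 0" by (simp add: vec2_eq_iff)

lemma mkv_surj: "v = mkv (v$1) (v$2)" by (simp add: vec2_eq_iff)

lemma inner_mkv [simp]: "mkv a b \<bullet> mkv c d = a*c + b*d"
  by (simp add: inner_vec_def sum_2)

lemma inner2: "(v::real^2) \<bullet> w = v$1 * w$1 + v$2 * w$2"
  by (simp add: inner_vec_def sum_2)

lemma norm_mkv: "norm (mkv a b) = sqrt (a^2 + b^2)"
  by (simp add: norm_eq_sqrt_inner power2_eq_square)

locale pyth =
  fixes l1 l2 n2 :: int
  assumes l12: "l1 > l2" and l2n: "l2 > n2" and n2p: "n2 > 0" and pyt: "l1^2 = l2^2 + n2^2"
begin

abbreviation "L1 \<equiv> real_of_int l1"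
abbreviation "L2 \<equiv> real_of_int l2"
abbreviation "N2 \<equiv> real_of_int n2"
abbreviation "U \<equiv> Atil l1 l2 n2"
abbreviation "ac \<equiv> acoef l1 l2 n2"

lemma rfacts: "L1 > L2" "L2 > N2" "N2 > 0" "L1 > 0" "L2 > 0" "L1^2 = L2^2 + N2^2"
proof -
  show "L1 > L2" "L2 > N2" "N2 > 0" "L1 > 0" "L2 > 0" using l12 l2n n2p by simp_all
  have "real_of_int (l1^2) = real_of_int (l2^2 + n2^2)" using pyt by simp
  then show "L1^2 = L2^2 + N2^2" by simp
qed

lemma rne [simp]: "L1 \<noteq> L2" "L1 \<noteq> N2" "L1 \<noteq> - L1" "L1 \<noteq> - L2" "L1 \<noteq> - N2" "L1 \<noteq> 0" "0 \<noteq> L1" "L2 \<noteq> L1" "L2 \<noteq> N2" "L2 \<noteq> - L1" "L2 \<noteq> - L2" "L2 \<noteq> - N2" "L2 \<noteq> 0" "0 \<noteq> L2" "N2 \<noteq> L1" "N2 \<noteq> L2" "N2 \<noteq> - L1" "N2 \<noteq> - L2" "N2 \<noteq> - N2" "N2 \<noteq> 0" "0 \<noteq> N2" "- L1 \<noteq> L1" "- L1 \<noteq> L2" "- L1 \<noteq> N2" "- L1 \<noteq> - L2" "- L1 \<noteq> - N2" "- L1 \<noteq> 0" "0 \<noteq> - L1" "- L2 \<noteq> L1" "- L2 \<noteq> L2" "- L2 \<noteq> N2" "- L2 \<noteq> - L1" "- L2 \<noteq> - N2" "- L2 \<noteq> 0" "0 \<noteq> - L2" "- N2 \<noteq> L1"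 "- N2 \<noteq> L2" "- N2 \<noteq> N2" "- N2 \<noteq> - L1" "- N2 \<noteq> - L2" "- N2 \<noteq> 0" "0 \<noteq> - N2"
  using rfacts by linarith+

lemma ine [simp]: "l1 \<noteq> 0" "l2 \<noteq> 0" "n2 \<noteq> 0" "l1 \<noteq> l2" "l2 \<noteq> l1" "l1 \<noteq> n2" "n2 \<noteq> l1"
  "l2 \<noteq> n2" "n2 \<noteq> l2" "l1 \<noteq> - l2" "l2 \<noteq> - l1" "l1 \<noteq> - n2" "n2 \<noteq> - l1" "l2 \<noteq> - n2" "n2 \<noteq> - l2"
  "- l1 \<noteq> l2" "- l2 \<noteq> l1" "- l1 \<noteq> n2" "- n2 \<noteq> l1" "- l2 \<noteq> n2" "- n2 \<noteq> l2"
  using l12 l2n n2p by linarith+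

lemma vecs: "vq1 l1 = mkv L1 0" "vq2 l1 = mkv 0 L1" "vp1 l2 n2 = mkv L2 N2" "vp2 l2 n2 = mkv L2 (-N2)"
  "vp3 l2 n2 = mkv N2 L2" "vp4 l2 n2 = mkv N2 (-L2)"
  by (simp_all add: vq1_def vq2_def vp1_def vp2_def vp3_def vp4_def mkv_def)

lemma U_eq: "U = {mkv L1 0, mkv (-L1) 0, mkv 0 L1, mkv 0 (-L1), mkv L2 N2, mkv (-L2) (-N2),
   mkv L2 (-N2), mkv (-L2) N2, mkv N2 L2, mkv (-N2) (-L2), mkv N2 (-L2), mkv (-N2) L2}"
  by (simp add: Atil_def vecs)

lemma ac_test: "ac x (mkv N2 (-L2)) = x 5"
  by (simp add: acoef_def vecs)
lemma ac1: "ac x (mkv L1 0) = x 0" by (simp add: acoef_def vecs)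
lemma ac2: "ac x (mkv (-L1) 0) = cnj (x 0)" by (simp add: acoef_def vecs)
lemma ac3: "ac x (mkv 0 L1) = x 1" by (simp add: acoef_def vecs)
lemma ac4: "ac x (mkv 0 (-L1)) = cnj (x 1)" by (simp add: acoef_def vecs)
lemma ac5: "ac x (mkv L2 N2) = x 2" by (simp add: acoef_def vecs)
lemma ac6: "ac x (mkv (-L2) (-N2)) = cnj (x 2)" by (simp add: acoef_def vecs)
lemma ac7: "ac x (mkv L2 (-N2)) = x 3" by (simp add: acoef_def vecs)
lemma ac8: "ac x (mkv (-L2) N2) = cnj (x 3)" by (simp add: acoef_def vecs)
lemma ac9: "ac x (mkv N2 L2) = x 4" by (simp add: acoef_def vecs)
lemma ac10: "ac x (mkv (-N2) (-L2)) = cnj (x 4)" by (simp add: acoef_def vecs)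
lemma ac11: "ac x (mkv N2 (-L2)) = x 5" by (simp add: acoef_def vecs)
lemma ac12: "ac x (mkv (-N2) L2) = cnj (x 5)" by (simp add: acoef_def vecs)
lemmas ac_vals = ac1 ac2 ac3 ac4 ac5 ac6 ac7 ac8 ac9 ac10 ac11 ac12

lemma U_abs: "v \<in> U \<Longrightarrow> (\<bar>v$1\<bar> = L1 \<and> v$2 = 0) \<or> (v$1 = 0 \<and> \<bar>v$2\<bar> = L1) \<or> (\<bar>v$1\<bar> = L2 \<and> \<bar>v$2\<bar> = N2)
   \<or> (\<bar>v$1\<bar> = N2 \<and> \<bar>v$2\<bar> = L2)"
proof -
  have a: "\<bar>L1\<bar> = L1" "\<bar>L2\<bar> = L2" "\<bar>N2\<bar> = N2" using rfacts by auto
  assume "v \<in> U"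
  then show ?thesis unfolding U_eq by (elim insertE emptyE; simp add: a)
qed

lemma U_circle: "U \<subseteq> circleA L1"
proof -
  have "sqrt (L2^2 + N2^2) = L1" using rfacts by (metis real_sqrt_abs abs_of_pos)
  then show ?thesis using rfacts unfolding U_eq circleA_def by (auto simp: norm_mkv add.commute)
qed

end


definition sg :: "real^2 \<Rightarrow> real^2" where "sg v = mkv (v$1) (-(v$2))"
definition rho :: "real \<Rightarrow> real^2 \<Rightarrow> real^2 \<Rightarrow> real^2" where
  "rho r k v = mkv ((k$1 * v$1 + k$2 * v$2)/r) ((k$1 * v$2 - k$2 * v$1)/r)"

lemma sg_mkv [simp]: "sg (mkv a b) = mkv a (-b)" by (simp add: sg_def)
lemma sg_sg [simp]: "sg (sg v) = v" by (simp add: sg_def vec2_eq_iff)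

context pyth begin

definition Ri :: "real^2 \<Rightarrow> real^2" where "Ri = rho L1 (vp1 l2 n2)"
definition Rr :: "real^2 \<Rightarrow> real^2" where
  "Rr v = mkv ((L2 * v$1 - N2 * v$2)/L1) ((N2 * v$1 + L2 * v$2)/L1)"

lemma Ri_mkv [simp]: "Ri (mkv a b) = mkv ((L2 * a + N2 * b)/L1) ((L2 * b - N2 * a)/L1)"
  by (simp add: Ri_def rho_def vecs)
lemma Rr_mkv [simp]: "Rr (mkv a b) = mkv ((L2 * a - N2 * b)/L1) ((N2 * a + L2 * b)/L1)"
  by (simp add: Rr_def)

lemma Rr_Ri [simp]: "Rr (Ri v) = v"
proof -
  obtain a b where v: "v = mkv a b" using mkv_surj by blast
  have e: "L1*L1 = L2*L2 + N2*N2" using rfacts by (simp add: power2_eq_square)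
  have 1: "(L2 * ((L2*a + N2*b)/L1) - N2*((L2*b - N2*a)/L1))/L1 = a"
  proof -
    have "(L2 * ((L2*a + N2*b)/L1) - N2*((L2*b - N2*a)/L1))/L1 = a * (L2*L2 + N2*N2) / (L1*L1)"
      by (simp add: field_simps, (simp add: algebra_simps)?)
    then show ?thesis using e by simp
  qed
  have 2: "(N2 * ((L2*a + N2*b)/L1) + L2*((L2*b - N2*a)/L1))/L1 = b"
  proof -
    have "(N2 * ((L2*a + N2*b)/L1) + L2*((L2*b - N2*a)/L1))/L1 = b * (L2*L2 + N2*N2) / (L1*L1)"
      by (simp add: field_simps, (simp add: algebra_simps)?)
    then show ?thesis using e by simp
  qed
  show ?thesis using 1 2 v by simp
qed

lemma Ri_Rr [simp]: "Ri (Rr v) = v"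
proof -
  obtain a b where v: "v = mkv a b" using mkv_surj by blast
  have e: "L1*L1 = L2*L2 + N2*N2" using rfacts by (simp add: power2_eq_square)
  have 1: "(L2 * ((L2*a - N2*b)/L1) + N2*((N2*a + L2*b)/L1))/L1 = a"
  proof -
    have "(L2 * ((L2*a - N2*b)/L1) + N2*((N2*a + L2*b)/L1))/L1 = a * (L2*L2 + N2*N2) / (L1*L1)"
      by (simp add: field_simps, (simp add: algebra_simps)?)
    then show ?thesis using e by simp
  qed
  have 2: "(L2 * ((N2*a + L2*b)/L1) - N2*((L2*a - N2*b)/L1))/L1 = b"
  proof -
    have "(L2 * ((N2*a + L2*b)/L1) - N2*((L2*a - N2*b)/L1))/L1 = b * (L2*L2 + N2*N2) / (L1*L1)"
      by (simp add: field_simps, (simp add: algebra_simps)?)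
    then show ?thesis using e by simp
  qed
  show ?thesis using 1 2 v by simp
qed

definition "Aa = (L2^2 - N2^2)/L1"
definition "Bb = 2*L2*N2/L1"
definition "Cc = L2*(L2^2 - 3*N2^2)/L1^2"
definition "Dd = N2*(3*L2^2 - N2^2)/L1^2"

lemma ABD_pos: "Aa > 0" "Bb > 0" "Dd > 0"
proof -
  have "N2^2 < L2^2" using rfacts by (simp add: power_strict_mono)
  then show "Aa > 0" using rfacts by (simp add: Aa_def)
  show "Bb > 0" using rfacts by (simp add: Bb_def)
  have "N2^2 < 3*L2^2" using \<open>N2^2 < L2^2\<close> by (smt (verit) zero_le_power2)
  then have "N2*(3*L2^2 - N2^2) > 0" using rfacts by simp
  moreover have "L1^2 > 0" using rfacts(4) by simp
  ultimately show "Dd > 0" unfolding Dd_def by simp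
qed

lemma not_3: "L2^2 \<noteq> 3 * N2^2"
proof
  assume "L2^2 = 3 * N2^2"
  then have "real_of_int (l2^2) = real_of_int (3 * n2^2)" by simp
  then have "l2^2 = 3 * n2^2" by (simp only: of_int_eq_iff)
  then show False using no3[of n2 l2] by simp
qed

lemma not_2: "(N2 + L2)^2 \<noteq> 2 * L2^2"
proof
  assume "(N2 + L2)^2 = 2 * L2^2"
  then have "real_of_int ((n2 + l2)^2) = real_of_int (2 * l2^2)" by simp
  then have "(n2+l2)^2 = 2 * l2^2" by (simp only: of_int_eq_iff)
  then show False using no2[of l2 "n2+l2"] by simp
qed

lemma AB_notin: assumes "(\<bar>x\<bar> = Aa \<and> \<bar>y\<bar> = Bb) \<or> (\<bar>x\<bar> = Bb \<and> \<bar>y\<bar> = Aa)" shows "mkv x y \<notin> U"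
proof
  assume "mkv x y \<in> U"
  from U_abs[OF this] have h: "(\<bar>x\<bar> = L1 \<and> y = 0) \<or> (x = 0 \<and> \<bar>y\<bar> = L1) \<or> (\<bar>x\<bar> = L2 \<and> \<bar>y\<bar> = N2)
   \<or> (\<bar>x\<bar> = N2 \<and> \<bar>y\<bar> = L2)" by simp
  have p: "Aa > 0" "Bb > 0" using ABD_pos by auto
  have r: "L1 > 0" "L2 > N2" "N2 > 0" "L1^2 = L2^2 + N2^2" using rfacts by auto
  have c1: "Bb \<noteq> N2"
  proof
    assume "Bb = N2"
    then have "2*L2*N2 = N2 * L1" using r by (simp add: Bb_def field_simps)
    then have "L1 = 2*L2" using r by simp
    then have "L1^2 = 4*L2^2" by (simp add: power2_eq_square)
    moreover have "N2^2 < L2^2" using r by (simp add: power_strict_mono)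
    ultimately show False using r zero_le_power2[of L2] by linarith
  qed
  have c2: "Bb \<noteq> L2"
  proof
    assume "Bb = L2"
    then have "2*L2*N2 = L2 * L1" using r by (simp add: Bb_def field_simps)
    then have "L1 = 2*N2" using rfacts by simp
    then have "L2^2 = 3 * N2^2" using r by (simp add: power2_eq_square)
    then show False using not_3 by simp
  qed
  from h assms show False using p c1 c2 by (elim disjE conjE; smt (verit))
qed

lemma CD_notin: assumes "(\<bar>x\<bar> = \<bar>Cc\<bar> \<and> \<bar>y\<bar> = Dd) \<or> (\<bar>x\<bar> = Dd \<and> \<bar>y\<bar> = \<bar>Cc\<bar>)" shows "mkv x y \<notin> U"
proof
  assume "mkv x y \<in> U"
  from U_abs[OF this] have h: "(\<bar>x\<bar> = L1 \<and> y = 0) \<or> (x = 0 \<and> \<bar>y\<bar> = L1) \<or> (\<bar>x\<bar> = L2 \<and> \<bar>y\<bar> = N2)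
   \<or> (\<bar>x\<bar> = N2 \<and> \<bar>y\<bar> = L2)" by simp
  have p: "Dd > 0" using ABD_pos by auto
  have r: "L1 > 0" "L2 > N2" "N2 > 0" "L1^2 = L2^2 + N2^2" using rfacts by auto
  have c0: "Cc \<noteq> 0"
  proof
    assume "Cc = 0"
    then have "L2^2 - 3*N2^2 = 0" using r by (simp add: Cc_def)
    then show False using not_3 by simp
  qed
  have c1: "Dd \<noteq> N2"
  proof
    assume "Dd = N2"
    then have "N2*(3*L2^2 - N2^2) = N2 * L1^2" using r by (simp add: Dd_def field_simps)
    then have "3*L2^2 - N2^2 = L2^2 + N2^2" using r by simp
    then have "L2^2 = N2^2" by simp
    moreover have "N2^2 < L2^2" using r by (simp add: power_strict_mono)
    ultimately show False by linarith
  qed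
  have c2: "Dd \<noteq> L2"
  proof
    assume "Dd = L2"
    then have "N2*(3*L2^2 - N2^2) = L2 * L1^2" using r by (simp add: Dd_def field_simps)
    then have "N2*(3*L2^2 - N2^2) = L2 * (L2^2 + N2^2)" using r by simp
    moreover have "(N2 - L2) * ((N2 + L2)^2 - 2 * L2^2) = L2*(L2^2+N2^2) - N2*(3*L2^2 - N2^2)" by algebra
    ultimately have "(N2 - L2) * ((N2 + L2)^2 - 2 * L2^2) = 0" by simp
    then have "(N2 + L2)^2 = 2 * L2^2" using r by simp
    then show False using not_2 by simp
  qed
  from h assms show False using p c0 c1 c2 by (elim disjE conjE; smt (verit))
qed

end


lemma sg_neg: "sg (- v) = - sg v" by (simp add: sg_def vec2_eq_iff)

context pyth begin

lemma Ri_neg: "Ri (- v) = - Ri v" by (subst (1 2) mkv_surj) (simp only: mkv_ops Ri_mkv mkv_eq, simp add: field_simps)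
lemma Rr_neg: "Rr (- v) = - Rr v" by (subst (1 2) mkv_surj) (simp only: mkv_ops Rr_mkv mkv_eq, simp add: field_simps)

lemma U_neg: "- v \<in> U \<longleftrightarrow> v \<in> U"
proof -
  have "v \<in> U \<Longrightarrow> - v \<in> U" for v unfolding U_eq by (elim insertE emptyE; simp)
  from this[of v] this[of "-v"] show ?thesis by auto
qed

lemma e1: "L1*L1 = L2*L2 + N2*N2" using rfacts by (simp add: power2_eq_square)

lemma Rr_tab: "Rr (mkv L1 0) = mkv L2 N2" "Rr (mkv 0 L1) = mkv (-N2) L2"
  "Rr (mkv L2 (-N2)) = mkv L1 0" "Rr (mkv N2 L2) = mkv 0 L1"
  "Rr (mkv L2 N2) = mkv Aa Bb" "Rr (mkv N2 (-L2)) = mkv Bb (-Aa)"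
  by (simp_all add: Aa_def Bb_def power2_eq_square field_simps e1[symmetric])

lemma Ri_tab: "Ri (mkv L1 0) = mkv L2 (-N2)" "Ri (mkv 0 L1) = mkv N2 L2"
  "Ri (mkv L2 N2) = mkv L1 0" "Ri (mkv N2 (-L2)) = mkv 0 (-L1)"
  "Ri (mkv L2 (-N2)) = mkv Aa (-Bb)" "Ri (mkv N2 L2) = mkv Bb Aa"
  by (simp_all add: Aa_def Bb_def power2_eq_square field_simps e1[symmetric])

lemma Rr_AB1: "Rr (mkv Aa Bb) = mkv Cc Dd"
  unfolding Rr_mkv mkv_eq Aa_def Bb_def Cc_def Dd_def
  by (intro conjI; simp add: field_simps power2_eq_square)
lemma Rr_AB2: "Rr (mkv Bb (-Aa)) = mkv Dd (-Cc)"
  unfolding Rr_mkv mkv_eq Aa_def Bb_def Cc_def Dd_def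
  by (intro conjI; simp add: field_simps power2_eq_square)

lemma Rr_tab2: "Rr (mkv (-L1) 0) = mkv (-L2) (-N2)" "Rr (mkv 0 (-L1)) = mkv N2 (-L2)"
  "Rr (mkv (-L2) N2) = mkv (-L1) 0" "Rr (mkv (-N2) (-L2)) = mkv 0 (-L1)"
  "Rr (mkv (-L2) (-N2)) = mkv (-Aa) (-Bb)" "Rr (mkv (-N2) L2) = mkv (-Bb) Aa"
  by (simp_all add: Aa_def Bb_def power2_eq_square field_simps e1[symmetric])

lemma Ri_tab2: "Ri (mkv (-L1) 0) = mkv (-L2) N2" "Ri (mkv 0 (-L1)) = mkv (-N2) (-L2)"
  "Ri (mkv (-L2) (-N2)) = mkv (-L1) 0" "Ri (mkv (-N2) L2) = mkv 0 L1"
  "Ri (mkv (-L2) N2) = mkv (-Aa) Bb" "Ri (mkv (-N2) (-L2)) = mkv (-Bb) (-Aa)"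
  by (simp_all add: Aa_def Bb_def power2_eq_square field_simps e1[symmetric])

lemma Rr_AB3: "Rr (mkv (-Aa) (-Bb)) = mkv (-Cc) (-Dd)" 
  using Rr_AB1 Rr_neg[of "mkv Aa Bb"] by simp
lemma Rr_AB4: "Rr (mkv (-Bb) Aa) = mkv (-Dd) Cc" 
  using Rr_AB2 Rr_neg[of "mkv Bb (-Aa)"] by simp

lemma inU: "mkv L1 0 \<in> U" "mkv (-L1) 0 \<in> U" "mkv 0 L1 \<in> U" "mkv 0 (-L1) \<in> U"
  "mkv L2 N2 \<in> U" "mkv (-L2) (-N2) \<in> U" "mkv L2 (-N2) \<in> U" "mkv (-L2) N2 \<in> U"
  "mkv N2 L2 \<in> U" "mkv (-N2) (-L2) \<in> U" "mkv N2 (-L2) \<in> U" "mkv (-N2) L2 \<in> U"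
  by (simp_all add: U_eq)

lemma notU1: "mkv Aa Bb \<notin> U" "mkv (-Aa) (-Bb) \<notin> U" "mkv Aa (-Bb) \<notin> U" "mkv (-Aa) Bb \<notin> U"
  "mkv Bb Aa \<notin> U" "mkv (-Bb) (-Aa) \<notin> U" "mkv Bb (-Aa) \<notin> U" "mkv (-Bb) Aa \<notin> U"
  using ABD_pos by (auto intro!: AB_notin)
lemma notU2:
  "mkv Cc Dd \<notin> U" "mkv (-Cc) (-Dd) \<notin> U" "mkv Cc (-Dd) \<notin> U" "mkv (-Cc) Dd \<notin> U"
  "mkv Dd Cc \<notin> U" "mkv (-Dd) (-Cc) \<notin> U" "mkv Dd (-Cc) \<notin> U" "mkv (-Dd) Cc \<notin> U"
  using ABD_pos by (auto intro!: CD_notin)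
lemmas notU = notU1 notU2

lemmas tabs = Rr_tab Rr_tab2 Ri_tab Ri_tab2 Rr_AB1 Rr_AB2 Rr_AB3 Rr_AB4 inU notU ac_vals

lemma U_cases: "j \<in> U \<Longrightarrow> j = mkv L1 0 \<or> j = mkv (-L1) 0 \<or> j = mkv 0 L1 \<or> j = mkv 0 (-L1) \<or>
  j = mkv L2 N2 \<or> j = mkv (-L2) (-N2) \<or> j = mkv L2 (-N2) \<or> j = mkv (-L2) N2 \<or>
  j = mkv N2 L2 \<or> j = mkv (-N2) (-L2) \<or> j = mkv N2 (-L2) \<or> j = mkv (-N2) L2"
  unfolding U_eq by blast

definition "P23 = {mkv L2 (-N2), mkv (-L2) N2, mkv N2 L2, mkv (-N2) (-L2)}"

lemma P23_U: "P23 \<subseteq> U" unfolding P23_def using inU by auto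

lemma E1: "j \<in> P23 \<Longrightarrow> Ri j \<notin> U \<and> sg (Ri j) \<notin> U \<and> Rr (sg (Ri j)) \<notin> U"
  unfolding P23_def by (elim insertE emptyE; simp add: tabs del: Ri_mkv Rr_mkv)

lemma E3: "j \<in> U \<Longrightarrow> (Rr j \<in> U \<longrightarrow> ac x (Rr j) = ac (mk6 (x 2) (cnj (x 5)) 0 (x 0) (x 1) 0) j)
   \<and> (Rr j \<notin> U \<longrightarrow> ac (mk6 (x 2) (cnj (x 5)) 0 (x 0) (x 1) 0) j = 0)"
  by (drule U_cases; elim disjE; simp add: tabs mk6_def del: Ri_mkv Rr_mkv)

lemma E4: "j \<in> U \<Longrightarrow> Ri j \<notin> U \<Longrightarrow> x 3 = 0 \<Longrightarrow> x 4 = 0 \<Longrightarrow> ac x j = 0"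
  by (drule U_cases; elim disjE; simp add: tabs del: Ri_mkv Rr_mkv)

lemma E5: "j \<in> U \<Longrightarrow> sg j \<in> U \<and> ac (gamma3 x) j = ac x (sg j)"
  by (drule U_cases; elim disjE; simp add: tabs gamma3_def mk6_def del: Ri_mkv Rr_mkv)

end


lemma upt6: "[0..<6] = [0,1,2,3,4,5::nat]" by (simp add: upt_rec)
lemma sum6: "(\<Sum>j<6::nat. f j) = f 0 + f 1 + f 2 + f 3 + f 4 + (f 5 :: 'a::comm_monoid_add)"
  by (simp add: numeral_eq_Suc add.assoc)
lemma prod6: "(\<Prod>j<6::nat. f j) = f 0 * f 1 * f 2 * f 3 * f 4 * (f 5 :: 'a::comm_monoid_mult)"
  by (simp add: numeral_eq_Suc mult.assoc)

lemma sum_list_rep: "sum_list (replicate n (v::real^2)) = real n *\<^sub>R v"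
  by (induction n) (simp_all add: algebra_simps)

lemma fac: "(exp (-\<i> * complex_of_real t) * y)^n * cnj (exp (-\<i> * complex_of_real t) * y)^m
   = exp (-\<i> * complex_of_real ((real n - real m) * t)) * (y^n * cnj y^m)"
proof -
  have c: "cnj (exp (-\<i> * complex_of_real t)) = exp (\<i> * complex_of_real t)" by (simp add: exp_cnj)
  have "exp (-\<i> * complex_of_real t)^n * exp (\<i> * complex_of_real t)^m
      = exp (of_nat n * (-\<i> * complex_of_real t)) * exp (of_nat m * (\<i> * complex_of_real t))"
    by (simp only: exp_of_nat_mult[symmetric])
  also have "\<dots> = exp (-\<i> * complex_of_real ((real n - real m) * t))"
    by (simp add: exp_add[symmetric] algebra_simps)
  finally have e: "exp (-\<i> * complex_of_real t)^n * exp (\<i> * complex_of_real t)^m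
      = exp (-\<i> * complex_of_real ((real n - real m) * t))" .
  show ?thesis unfolding complex_cnj_mult c power_mult_distrib e[symmetric] by (simp add: algebra_simps)
qed

context pyth begin

definition vv :: "nat \<Rightarrow> real^2" where
  "vv j = (if j=0 then mkv L1 0 else if j=1 then mkv 0 L1 else if j=2 then mkv L2 N2
     else if j=3 then mkv L2 (-N2) else if j=4 then mkv N2 L2 else mkv N2 (-L2))"

definition Lst :: "(nat \<Rightarrow> nat) \<Rightarrow> (nat \<Rightarrow> nat) \<Rightarrow> (real^2) list" where
  "Lst e ec = concat (map (\<lambda>j. replicate (e j) (vv j) @ replicate (ec j) (- vv j)) [0..<6])"

lemma Lst_length: "length (Lst e ec) = mdeg e ec"
  by (simp add: Lst_def mdeg_def upt6 sum6)

lemma Lst_set: "set (Lst e ec) \<subseteq> U"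
  using inU by (auto simp: Lst_def upt6 vv_def)

lemma Lst_prod: "prod_list (map (ac x) (Lst e ec)) = mono e ec x"
  by (simp add: Lst_def mono_def upt6 prod6 vv_def ac_vals mult.assoc)

lemma Lst_sum: "sum_list (Lst e ec) = (\<Sum>j<6. (real (e j) - real (ec j)) *\<^sub>R vv j)"
  by (simp add: Lst_def upt6 sum6 sum_list_rep algebra_simps)

lemma Ttr_j: assumes "j < 6" shows "Ttr l1 l2 n2 a b x j = exp (-\<i> * complex_of_real (vv j \<bullet> mkv a b)) * x j"
proof -
  have "j=0 \<or> j=1 \<or> j=2 \<or> j=3 \<or> j=4 \<or> j=5" using assms by auto
  then show ?thesis by (elim disjE; simp add: Ttr_def mk6_def vv_def algebra_simps)
qed

lemma mono_Ttr: "mono e ec (Ttr l1 l2 n2 a b x) =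
   exp (-\<i> * complex_of_real ((\<Sum>j<6. (real (e j) - real (ec j)) *\<^sub>R vv j) \<bullet> mkv a b)) * mono e ec x"
proof -
  have "mono e ec (Ttr l1 l2 n2 a b x) = (\<Prod>j<6. exp (-\<i> * complex_of_real ((real (e j) - real (ec j)) * (vv j \<bullet> mkv a b))) * (x j ^ e j * cnj (x j) ^ ec j))"
    unfolding mono_def
  proof (rule prod.cong)
    fix j assume "j \<in> {..<6::nat}"
    then have j: "j < 6" by simp
    show "(Ttr l1 l2 n2 a b x j)^e j * cnj (Ttr l1 l2 n2 a b x j)^ec j = exp (-\<i> * complex_of_real ((real (e j) - real (ec j)) * (vv j \<bullet> mkv a b))) * (x j ^ e j * cnj (x j) ^ ec j)"
      unfolding Ttr_j[OF j] by (rule fac)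
  qed simp
  also have "\<dots> = (\<Prod>j<6. exp (-\<i> * complex_of_real ((real (e j) - real (ec j)) * (vv j \<bullet> mkv a b)))) * mono e ec x"
    unfolding mono_def by (simp add: prod.distrib)
  also have "(\<Prod>j<6. exp (-\<i> * complex_of_real ((real (e j) - real (ec j)) * (vv j \<bullet> mkv a b))))
     = exp (\<Sum>j<6. -\<i> * complex_of_real ((real (e j) - real (ec j)) * (vv j \<bullet> mkv a b)))"
    by (simp add: exp_sum)
  also have "(\<Sum>j<6. -\<i> * complex_of_real ((real (e j) - real (ec j)) * (vv j \<bullet> mkv a b)))
     = -\<i> * complex_of_real ((\<Sum>j<6. (real (e j) - real (ec j)) *\<^sub>R vv j) \<bullet> mkv a b)"
    by (simp add: inner_sum_left sum_distrib_left)
  finally show ?thesis .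
qed

lemma inv_sum:
  assumes inv: "\<And>a b x. cnj (Ttr l1 l2 n2 a b x j0) * mono e ec (Ttr l1 l2 n2 a b x) = cnj (x j0) * mono e ec x"
    and j0: "j0 < 6"
  shows "sum_list (Lst e ec) = vv j0"
proof (rule ccontr)
  define S where "S = (\<Sum>j<6. (real (e j) - real (ec j)) *\<^sub>R vv j)"
  define d where "d = vv j0 - S"
  assume "sum_list (Lst e ec) \<noteq> vv j0"
  then have dn: "d \<noteq> 0" by (simp add: d_def S_def Lst_sum)
  define w where "w = (pi / (d \<bullet> d)) *\<^sub>R d"
  have dw: "d \<bullet> w = pi" using dn by (simp add: w_def)
  have m1: "mono e ec (\<lambda>_. 1) = 1" by (simp add: mono_def)
  have "cnj (Ttr l1 l2 n2 (w$1) (w$2) (\<lambda>_. 1) j0) * mono e ec (Ttr l1 l2 n2 (w$1) (w$2) (\<lambda>_. 1)) = 1"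
    using inv[of "w$1" "w$2" "\<lambda>_. 1"] m1 by simp
  then have "exp (\<i> * complex_of_real (vv j0 \<bullet> w)) * exp (-\<i> * complex_of_real (S \<bullet> w)) = 1"
    using j0 by (simp add: Ttr_j mono_Ttr exp_cnj m1 S_def mkv_surj[symmetric])
  then have "exp (\<i> * complex_of_real (d \<bullet> w)) = 1"
    by (simp add: d_def inner_diff_left exp_add[symmetric] algebra_simps)
  then show False using dw by simp
qed

end


definition cross :: "real^2 \<Rightarrow> real^2 \<Rightarrow> real" where "cross u w = u$1 * w$2 - u$2 * w$1"

lemma rho_alt: "rho r k v = mkv ((k \<bullet> v)/r) (cross k v / r)"
  by (simp add: rho_def inner2 cross_def)

lemma orth_cross:
  assumes g: "orthogonal_transformation g"
  shows "(\<forall>k v. cross (g k) (g v) = cross k v) \<or> (\<forall>k v. cross (g k) (g v) = - cross k v)"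
proof -
  have lin: "linear g" and ip: "\<And>u w. g u \<bullet> g w = u \<bullet> w" using g by (auto simp: orthogonal_transformation_def)
  define c1 where "c1 = g (mkv 1 0)"
  define c2 where "c2 = g (mkv 0 1)"
  have gv: "g v = (v$1) *\<^sub>R c1 + (v$2) *\<^sub>R c2" for v
  proof -
    have "(v$1) *\<^sub>R mkv 1 0 + (v$2) *\<^sub>R mkv 0 1 = v" by (simp add: vec2_eq_iff)
    then have "g v = g ((v$1) *\<^sub>R mkv 1 0 + (v$2) *\<^sub>R mkv 0 1)" by simp
    also have "\<dots> = (v$1) *\<^sub>R c1 + (v$2) *\<^sub>R c2" by (simp only: linear_add[OF lin] linear_scale[OF lin] c1_def c2_def)
    finally show ?thesis .
  qed
  define dt where "dt = cross c1 c2"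
  have cr: "cross (g k) (g v) = dt * cross k v" for k v
    unfolding gv dt_def cross_def by (simp add: algebra_simps)
  have n1: "c1 \<bullet> c1 = 1" "c2 \<bullet> c2 = 1" "c1 \<bullet> c2 = 0" unfolding c1_def c2_def ip by simp_all
  have "dt^2 = (c1 \<bullet> c1) * (c2 \<bullet> c2) - (c1 \<bullet> c2)^2"
    unfolding dt_def cross_def inner2 by (simp add: power2_eq_square algebra_simps)
  then have "dt^2 = 1" using n1 by simp
  then have "dt = 1 \<or> dt = -1" by (simp add: power2_eq_1_iff)
  then show ?thesis using cr by auto
qed

lemma rho_orth:
  assumes g: "orthogonal_transformation g"
  shows "(\<forall>k v. rho r (g k) (g v) = rho r k v) \<or> (\<forall>k v. rho r (g k) (g v) = sg (rho r k v))"
proof -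
  have ip: "\<And>u w. g u \<bullet> g w = u \<bullet> w" using g by (auto simp: orthogonal_transformation_def)
  from orth_cross[OF g] show ?thesis
    by (auto simp: rho_alt ip)
qed

lemma rho_add: "rho r k (u + w) = rho r k u + rho r k w"
  by (cases "r = 0") (simp_all add: rho_def field_simps)
lemma rho_zero: "rho r k 0 = 0"
  by (simp add: rho_def mkv_zero)
lemma rho_sum_list: "sum_list (map (rho r k) ks) = rho r k (sum_list ks)"
  by (induction ks) (simp_all add: rho_zero rho_add)
lemma sg_add: "sg (u + w) = sg u + sg w" by (simp add: sg_def)
lemma sg_sum_list: "sum_list (map sg ks) = sg (sum_list ks)"
  by (induction ks) (simp_all add: sg_add sg_def mkv_zero)

lemma rho_inj: assumes "r \<noteq> 0" "k \<noteq> 0" "rho r k u = rho r k w" shows "u = w"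
proof -
  define d where "d = u - w"
  have "(k \<bullet> u)/r = (k \<bullet> w)/r" "cross k u / r = cross k w / r" using assms(3) by (simp_all add: rho_alt)
  then have "k \<bullet> u = k \<bullet> w" "cross k u = cross k w" using assms(1) by simp_all
  then have "k \<bullet> d = 0" "cross k d = 0" by (simp_all add: d_def inner_diff_right cross_def algebra_simps)
  then have "(k \<bullet> k) * (d \<bullet> d) = 0"
  proof -
    have "(k \<bullet> k) * (d \<bullet> d) = (k \<bullet> d)^2 + (cross k d)^2"
      unfolding inner2 cross_def by (simp add: power2_eq_square algebra_simps)
    then show ?thesis using \<open>k \<bullet> d = 0\<close> \<open>cross k d = 0\<close> by simp
  qed
  then have "d = 0" using assms(2) by simp
  then show ?thesis by (simp add: d_def)
qed

lemma rho_self: assumes "norm k = r" "r \<noteq> 0" shows "rho r k k = mkv r 0"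
proof -
  have "k \<bullet> k = r^2" using assms by (simp add: power2_norm_eq_inner[symmetric])
  then show ?thesis using assms(2) by (simp add: rho_alt cross_def power2_eq_square)
qed

lemma rho_id: "r \<noteq> 0 \<Longrightarrow> rho r (mkv r 0) v = v"
  by (subst (3) mkv_surj) (simp add: rho_def)

lemma rho_inner: assumes "norm k = r" "r \<noteq> 0" shows "rho r k u \<bullet> rho r k w = u \<bullet> w"
proof -
  have "k \<bullet> k = r^2" using assms(1) by (metis power2_norm_eq_inner)
  then have kk: "k$1 * k$1 + k$2 * k$2 = r * r" by (simp add: inner2 power2_eq_square)
  have "rho r k u \<bullet> rho r k w = ((k$1 * k$1 + k$2 * k$2) * (u \<bullet> w)) / (r*r)"
    using assms(2) by (simp add: rho_def inner2 field_simps)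
  then show ?thesis using kk assms(2) by simp
qed

lemma rho_orthT: assumes "norm k = r" "r \<noteq> 0" shows "orthogonal_transformation (rho r k)"
  unfolding orthogonal_transformation_def
proof (intro conjI allI)
  show "linear (rho r k)"
    by (rule linearI) (simp_all add: rho_add, simp add: rho_def algebra_simps add_divide_distrib)
qed (rule rho_inner[OF assms])



definition ind :: "bool \<Rightarrow> complex" where "ind b = (if b then 1 else 0)"

lemma sum_ind: "finite S \<Longrightarrow> (\<Sum>ks\<in>S. g ks * ind (ks = T)) = (if T \<in> S then g T else 0)"
proof -
  assume f: "finite S"
  have "(\<Sum>ks\<in>S. g ks * ind (ks = T)) = (\<Sum>ks\<in>S. if ks = T then g ks else 0)"
    by (rule sum.cong) (auto simp: ind_def)
  also have "\<dots> = (if T \<in> S then g T else 0)" using f by simp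
  finally show ?thesis .
qed

lemma map_inv_iff: assumes "\<And>v. f (g v) = v" "\<And>v. g (f v) = v"
  shows "map f ks = T \<longleftrightarrow> ks = map g T"
proof
  assume "map f ks = T" then show "ks = map g T" using assms(2) by (auto simp: map_idI)
next
  assume "ks = map g T" then show "map f ks = T" using assms(1) by (simp add: map_idI)
qed

lemma prod_zero: "j \<in> set ks \<Longrightarrow> f j = (0::complex) \<Longrightarrow> prod_list (map f ks) = 0"
  by (simp add: prod_list_zero_iff)

context pyth begin

abbreviation "SS p \<equiv> {ks. length ks = p \<and> set ks \<subseteq> U}"

lemma SS_finite: "finite (SS p)"
proof -
  have "finite U" by (simp add: U_eq)
  then have "finite {xs. set xs \<subseteq> U \<and> length xs = p}" by (rule finite_lists_length_eq)
  moreover have "{xs. set xs \<subseteq> U \<and> length xs = p} = SS p" by auto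
  ultimately show ?thesis by simp
qed

lemma prod_gamma3: "set L \<subseteq> U \<Longrightarrow> prod_list (map (ac (gamma3 x)) L) = prod_list (map (ac x) (map sg L))"
  by (induction L) (auto simp: E5)

lemma sgU: "set L \<subseteq> U \<Longrightarrow> set (map sg L) \<subseteq> U" using E5 by auto

lemma Ylem: "set L0 \<subseteq> U \<Longrightarrow> prod_list (map (ac (mk6 (x 2) (cnj (x 5)) 0 (x 0) (x 1) 0)) L0)
   = (if set (map Rr L0) \<subseteq> U then prod_list (map (ac x) (map Rr L0)) else 0)"
proof (induction L0)
  case Nil then show ?case by simp
next
  case (Cons j L0)
  then have j: "j \<in> U" and L0: "set L0 \<subseteq> U" by auto
  show ?case
  proof (cases "Rr j \<in> U")
    case True
    then show ?thesis using E3[OF j, of x] Cons.IH[OF L0] by simp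
  next
    case False
    then show ?thesis using E3[OF j, of x] by simp
  qed
qed

definition "cc e' ec' = (if e' 3 + ec' 3 + e' 4 + ec' 4 = 0 then (0::complex) else 1)"

lemma P23_in: "e' 3 + ec' 3 + e' 4 + ec' 4 \<noteq> 0 \<Longrightarrow> \<exists>j\<in>set (Lst e' ec'). j \<in> P23"
proof -
  assume "e' 3 + ec' 3 + e' 4 + ec' 4 \<noteq> 0"
  then have "e' 3 > 0 \<or> ec' 3 > 0 \<or> e' 4 > 0 \<or> ec' 4 > 0" by auto
  then show ?thesis by (elim disjE) (auto simp: Lst_def upt6 vv_def P23_def)
qed

lemma mono_cut: "mono e' ec' (mk6 (x 0) (x 1) (x 2) 0 0 (x 5)) + cc e' ec' * mono e' ec' x = mono e' ec' x"
proof (cases "e' 3 + ec' 3 + e' 4 + ec' 4 = 0")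
  case True
  then show ?thesis by (simp add: cc_def mono_def prod6 mk6_def)
next
  case False
  then have "e' 3 > 0 \<or> ec' 3 > 0 \<or> e' 4 > 0 \<or> ec' 4 > 0" by auto
  then have "mono e' ec' (mk6 (x 0) (x 1) (x 2) 0 0 (x 5)) = 0"
    by (elim disjE) (simp_all add: mono_def prod6 mk6_def)
  moreover have "cc e' ec' = 1" using False unfolding cc_def by meson
  ultimately show ?thesis by simp
qed

end


context pyth begin

definition FF :: "(real^2) list \<Rightarrow> (real^2) list \<Rightarrow> complex \<Rightarrow> (real^2) list \<Rightarrow> complex" where
  "FF L L' c js = ind (js = L) + ind (map sg js = L) + c * (ind (js = map Ri L') + ind (map sg js = map Ri L'))"

definition PP :: "(real^2) list \<Rightarrow> (real^2) list \<Rightarrow> complex \<Rightarrow> real^2 \<Rightarrow> (real^2) list \<Rightarrow> complex" where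
  "PP L L' c k ks = FF L L' c (map (rho L1 k) ks)"

lemma map_sg_sg [simp]: "map sg (map sg js) = js" by (induction js) simp_all

lemma FF_sg: "FF L L' c (map sg js) = FF L L' c js"
  by (simp add: FF_def algebra_simps o_def)

lemma PP_inv: assumes g: "orthogonal_transformation g" shows "PP L L' c (g k) (map g ks) = PP L L' c k ks"
  using rho_orth[OF g, of L1]
proof
  assume "\<forall>k v. rho L1 (g k) (g v) = rho L1 k v"
  then have hm: "map (rho L1 (g k)) (map g ks) = map (rho L1 k) ks" by simp
  show ?thesis unfolding PP_def by (simp only: hm)
next
  assume "\<forall>k v. rho L1 (g k) (g v) = sg (rho L1 k v)"
  then have hm: "map (rho L1 (g k)) (map g ks) = map sg (map (rho L1 k) ks)" by simp
  show ?thesis unfolding PP_def by (simp only: hm FF_sg)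
qed

lemma Ri_rho: "rho L1 (mkv L2 N2) = Ri" by (simp add: Ri_def vecs)

lemma PP_zero:
  assumes k: "norm k = L1" and sL: "sum_list L = mkv L1 0" and sL': "sum_list L' = mkv L2 N2"
    and ne: "k \<noteq> sum_list ks"
  shows "PP L L' c k ks = 0"
proof (rule ccontr)
  define js where "js = map (rho L1 k) ks"
  assume "PP L L' c k ks \<noteq> 0"
  then have "FF L L' c js \<noteq> 0" by (simp add: PP_def js_def)
  then have cases: "js = L \<or> map sg js = L \<or> js = map Ri L' \<or> map sg js = map Ri L'"
    unfolding FF_def ind_def by (auto split: if_splits)
  have sRi: "sum_list (map Ri L') = mkv L1 0"
    using sL' rho_sum_list[of L1 "mkv L2 N2" L'] by (simp add: Ri_rho Ri_tab del: Ri_mkv)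
  have "sum_list js = mkv L1 0"
  proof -
    { assume "map sg js = L \<or> map sg js = map Ri L'"
      then have "sg (sum_list js) = mkv L1 0" using sL sRi by (auto simp: sg_sum_list[symmetric])
      then have "sum_list js = mkv L1 0" by (metis sg_sg sg_mkv neg_0_equal_iff_equal) }
    then show ?thesis using cases sL sRi by auto
  qed
  then have "rho L1 k (sum_list ks) = rho L1 k k"
    using rho_self[OF k] by (simp add: js_def rho_sum_list)
  moreover have "k \<noteq> 0" using k by auto
  ultimately have "sum_list ks = k" using rho_inj[of L1 k] by simp
  then show False using ne by simp
qed

lemma eq1:
  assumes hm: "mdeg e ec = p"
  shows "mono e ec x + mono e ec (gamma3 x) =
    (\<Sum>ks\<in>SS p. prod_list (map (ac x) ks) * PP (Lst e ec) (Lst e' ec') (cc e' ec') (vq1 l1) ks)"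
proof -
  define L where "L = Lst e ec"
  define L' where "L' = Lst e' ec'"
  define c where "c = cc e' ec'"
  define g where "g ks = prod_list (map (ac x) ks)" for ks
  have P1: "PP L L' c (vq1 l1) ks = ind (ks = L) + ind (ks = map sg L) + c * (ind (ks = map Ri L') + ind (ks = map sg (map Ri L')))" for ks
  proof -
    have "rho L1 (mkv L1 0) = (\<lambda>v. v)" using rho_id by auto
    then have "map (rho L1 (vq1 l1)) ks = ks" by (simp add: vecs)
    moreover have "(map sg ks = T) = (ks = map sg T)" for T by (rule map_inv_iff) simp_all
    ultimately show ?thesis by (simp add: PP_def FF_def)
  qed
  have "(\<Sum>ks\<in>SS p. g ks * PP L L' c (vq1 l1) ks) =
     (\<Sum>ks\<in>SS p. g ks * ind (ks = L)) + (\<Sum>ks\<in>SS p. g ks * ind (ks = map sg L))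
     + c * ((\<Sum>ks\<in>SS p. g ks * ind (ks = map Ri L')) + (\<Sum>ks\<in>SS p. g ks * ind (ks = map sg (map Ri L'))))"
    unfolding P1 by (simp add: algebra_simps sum.distrib sum_distrib_left)
  also have "\<dots> = g L + g (map sg L) + c * ((if map Ri L' \<in> SS p then g (map Ri L') else 0)
      + (if map sg (map Ri L') \<in> SS p then g (map sg (map Ri L')) else 0))"
  proof -
    have "L \<in> SS p" "map sg L \<in> SS p" using hm Lst_set[of e ec] sgU[of L] by (auto simp: L_def Lst_length)
    then show ?thesis by (simp add: sum_ind[OF SS_finite])
  qed
  also have "c * ((if map Ri L' \<in> SS p then g (map Ri L') else 0)
      + (if map sg (map Ri L') \<in> SS p then g (map sg (map Ri L')) else 0)) = 0"
  proof (cases "e' 3 + ec' 3 + e' 4 + ec' 4 = 0")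
    case True then show ?thesis by (simp add: c_def cc_def)
  next
    case False
    then obtain j where j: "j \<in> set L'" "j \<in> P23" using P23_in unfolding L'_def by blast
    then have "Ri j \<notin> U" "sg (Ri j) \<notin> U" using E1 by auto
    then have h1: "map Ri L' \<notin> SS p" and h2: "map sg (map Ri L') \<notin> SS p" using j(1) by auto
    show ?thesis by (simp only: if_not_P[OF h1] if_not_P[OF h2]) simp
  qed
  finally have "(\<Sum>ks\<in>SS p. g ks * PP L L' c (vq1 l1) ks) = g L + g (map sg L)" by simp
  moreover have "g L = mono e ec x" by (simp add: g_def L_def Lst_prod)
  moreover have "g (map sg L) = mono e ec (gamma3 x)"
    using prod_gamma3[of L x] Lst_set[of e ec] by (simp add: g_def L_def Lst_prod)
  ultimately show ?thesis by (simp add: g_def L_def L'_def c_def)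
qed

lemma comp_RiRr [simp]: "Ri \<circ> Rr = id" "Rr \<circ> Ri = id" by (simp_all add: fun_eq_iff)

lemma map_RiRr [simp]: "map Ri (map Rr js) = js" "map Rr (map Ri js) = js"
  by (induction js) simp_all

lemma eq2:
  assumes hm: "mdeg e ec = p" and hm': "mdeg e' ec' = p"
    and H: "\<forall>z1 z2 w2 w3. mono e ec (mk6 z1 z2 0 w2 w3 0) + mono e ec (gamma3 (mk6 z1 z2 0 w2 w3 0))
              = mono e' ec' (mk6 w2 w3 z1 0 0 (cnj z2))"
  shows "mono e' ec' x =
    (\<Sum>ks\<in>SS p. prod_list (map (ac x) ks) * PP (Lst e ec) (Lst e' ec') (cc e' ec') (vp1 l2 n2) ks)"
proof -
  define L where "L = Lst e ec"
  define L' where "L' = Lst e' ec'"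
  define c where "c = cc e' ec'"
  define g where "g ks = prod_list (map (ac x) ks)" for ks
  define y where "y = mk6 (x 2) (cnj (x 5)) 0 (x 0) (x 1) 0"
  have P2: "PP L L' c (vp1 l2 n2) ks = ind (ks = map Rr L) + ind (ks = map Rr (map sg L))
     + c * (ind (ks = L') + ind (ks = map Rr (map sg (map Ri L'))))" for ks
  proof -
    have a: "map (rho L1 (vp1 l2 n2)) ks = map Ri ks" by (simp add: Ri_def)
    have b1: "(map Ri ks = T) = (ks = map Rr T)" for T by (rule map_inv_iff) simp_all
    have b2: "(map sg (map Ri ks) = T) = (ks = map Rr (map sg T))" for T
    proof -
      have "(map (\<lambda>v. sg (Ri v)) ks = T) = (ks = map (\<lambda>v. Rr (sg v)) T)" by (rule map_inv_iff) simp_all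
      then show ?thesis by (simp add: o_def)
    qed
    show ?thesis unfolding PP_def FF_def by (simp only: a b2 b1 map_RiRr)
  qed
  have L'S: "L' \<in> SS p" using hm' Lst_set[of e' ec'] by (simp add: L'_def Lst_length)
  have "(\<Sum>ks\<in>SS p. g ks * PP L L' c (vp1 l2 n2) ks) =
     (\<Sum>ks\<in>SS p. g ks * ind (ks = map Rr L)) + (\<Sum>ks\<in>SS p. g ks * ind (ks = map Rr (map sg L)))
     + c * ((\<Sum>ks\<in>SS p. g ks * ind (ks = L')) + (\<Sum>ks\<in>SS p. g ks * ind (ks = map Rr (map sg (map Ri L')))))"
    unfolding P2 by (simp add: algebra_simps sum.distrib sum_distrib_left)
  also have "\<dots> = (if map Rr L \<in> SS p then g (map Rr L) else 0) + (if map Rr (map sg L) \<in> SS p then g (map Rr (map sg L)) else 0)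
     + c * (g L' + (if map Rr (map sg (map Ri L')) \<in> SS p then g (map Rr (map sg (map Ri L'))) else 0))"
    using L'S by (simp only: sum_ind[OF SS_finite] if_True)
  also have "(if map Rr (map sg (map Ri L')) \<in> SS p then g (map Rr (map sg (map Ri L'))) else 0) * c = 0"
  proof (cases "e' 3 + ec' 3 + e' 4 + ec' 4 = 0")
    case True then show ?thesis by (simp add: c_def cc_def)
  next
    case False
    then obtain j where j: "j \<in> set L'" "j \<in> P23" using P23_in unfolding L'_def by blast
    then have "Rr (sg (Ri j)) \<notin> U" using E1 by auto
    then have h1: "map Rr (map sg (map Ri L')) \<notin> SS p" using j(1) by auto
    show ?thesis by (simp only: if_not_P[OF h1]) simp
  qed
  then have "c * (g L' + (if map Rr (map sg (map Ri L')) \<in> SS p then g (map Rr (map sg (map Ri L'))) else 0))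
      = c * g L'" by (simp add: algebra_simps)
  also have "(if map Rr L \<in> SS p then g (map Rr L) else 0) = mono e ec y"
  proof -
    have "set L \<subseteq> U" "length L = p" using Lst_set hm by (auto simp: L_def Lst_length)
    then show ?thesis using Ylem[of L x] by (simp add: g_def y_def L_def Lst_prod)
  qed
  also have "(if map Rr (map sg L) \<in> SS p then g (map Rr (map sg L)) else 0) = mono e ec (gamma3 y)"
  proof -
    have sL: "set L \<subseteq> U" "length L = p" using Lst_set hm by (auto simp: L_def Lst_length)
    have "set (map sg L) \<subseteq> U" using sgU[OF sL(1)] .
    then have "prod_list (map (ac y) (map sg L)) = (if map Rr (map sg L) \<in> SS p then g (map Rr (map sg L)) else 0)"
      using Ylem[of "map sg L" x] sL by (simp add: g_def y_def)
    moreover have "prod_list (map (ac y) (map sg L)) = mono e ec (gamma3 y)"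
      using prod_gamma3[OF sL(1), of y] by (simp add: L_def Lst_prod)
    ultimately show ?thesis by simp
  qed
  also have "mono e ec y + mono e ec (gamma3 y) = mono e' ec' (mk6 (x 0) (x 1) (x 2) 0 0 (x 5))"
    using H[rule_format, of "x 2" "cnj (x 5)" "x 0" "x 1"] by (simp add: y_def)
  also have "g L' = mono e' ec' x" by (simp add: g_def L'_def Lst_prod)
  also have "mono e' ec' (mk6 (x 0) (x 1) (x 2) 0 0 (x 5)) + c * mono e' ec' x = mono e' ec' x"
    unfolding c_def by (rule mono_cut)
  finally show ?thesis by (simp add: g_def L_def L'_def c_def)
qed

lemma Ri_orth: "orthogonal_transformation Ri"
proof -
  have "norm (mkv L2 N2) = L1" using U_circle inU(5) by (auto simp: circleA_def)
  then show ?thesis unfolding Ri_rho[symmetric] by (rule rho_orthT) simp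
qed

lemma fwd:
  assumes inv: "\<forall>g k ks. orthogonal_transformation g \<and> k \<in> circleA L1 \<and> length ks = p \<and> set ks \<subseteq> circleA L1
                 \<longrightarrow> P (g k) (map g ks) = P k ks"
   and r1: "\<forall>x. mono e ec x + mono e ec (gamma3 x) = (\<Sum>ks\<in>SS p. prod_list (map (ac x) ks) * P (vq1 l1) ks)"
   and r2: "\<forall>x. mono e' ec' x = (\<Sum>ks\<in>SS p. prod_list (map (ac x) ks) * P (vp1 l2 n2) ks)"
  shows "mono e ec (mk6 z1 z2 0 w2 w3 0) + mono e ec (gamma3 (mk6 z1 z2 0 w2 w3 0))
        = mono e' ec' (mk6 w2 w3 z1 0 0 (cnj z2))"
proof -
  define x where "x = mk6 w2 w3 z1 0 0 (cnj z2)"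
  define y where "y = mk6 z1 z2 0 w2 w3 0"
  have yx: "y = mk6 (x 2) (cnj (x 5)) 0 (x 0) (x 1) 0" by (simp add: x_def y_def mk6_def)
  have x34: "x 3 = 0" "x 4 = 0" by (simp_all add: x_def mk6_def)
  define G where "G ks = prod_list (map (ac x) ks) * P (vq1 l1) (map Ri ks)" for ks
  define S1 where "S1 = {ks \<in> SS p. set (map Ri ks) \<subseteq> U}"
  define T1 where "T1 = {js \<in> SS p. set (map Rr js) \<subseteq> U}"
  have fin: "finite (SS p)" by (rule SS_finite)
  have "mono e' ec' x = (\<Sum>ks\<in>SS p. G ks)"
  proof -
    have "P (vp1 l2 n2) ks = P (vq1 l1) (map Ri ks)" if ks: "ks \<in> SS p" for ks
    proof -
      have "P (Ri (vp1 l2 n2)) (map Ri ks) = P (vp1 l2 n2) ks"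
        using inv[rule_format, of Ri "vp1 l2 n2" ks] Ri_orth ks U_circle inU(5) by (auto simp: vecs)
      moreover have "Ri (vp1 l2 n2) = vq1 l1" by (simp add: vecs Ri_tab del: Ri_mkv)
      ultimately show ?thesis by simp
    qed
    then show ?thesis using r2 by (simp add: G_def)
  qed
  also have "\<dots> = (\<Sum>ks\<in>SS p. if set (map Ri ks) \<subseteq> U then G ks else 0)"
  proof (rule sum.cong)
    fix ks assume ks: "ks \<in> SS p"
    show "G ks = (if set (map Ri ks) \<subseteq> U then G ks else 0)"
    proof (cases "set (map Ri ks) \<subseteq> U")
      case False
      then obtain j where j: "j \<in> set ks" "Ri j \<notin> U" by auto
      then have "ac x j = 0" using E4[of j x] ks x34 by auto
      then have "prod_list (map (ac x) ks) = 0" using j(1) by (rule prod_zero[rotated])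
      then show ?thesis by (simp add: G_def)
    qed simp
  qed simp
  also have "\<dots> = (\<Sum>ks\<in>S1. G ks)" unfolding S1_def by (rule sum.inter_filter[OF fin, symmetric])
  finally have R: "mono e' ec' x = (\<Sum>ks\<in>S1. G ks)" .
  have "mono e ec y + mono e ec (gamma3 y) = (\<Sum>js\<in>SS p. prod_list (map (ac y) js) * P (vq1 l1) js)"
    using r1 by simp
  also have "\<dots> = (\<Sum>js\<in>SS p. if set (map Rr js) \<subseteq> U then G (map Rr js) else 0)"
  proof (rule sum.cong)
    fix js assume js: "js \<in> SS p"
    then have sj: "set js \<subseteq> U" by simp
    have "prod_list (map (ac y) js) = (if set (map Rr js) \<subseteq> U then prod_list (map (ac x) (map Rr js)) else 0)"
      using Ylem[OF sj, of x] unfolding yx .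
    then show "prod_list (map (ac y) js) * P (vq1 l1) js = (if set (map Rr js) \<subseteq> U then G (map Rr js) else 0)"
      by (simp add: G_def o_def)
  qed simp
  also have "\<dots> = (\<Sum>js\<in>T1. G (map Rr js))" unfolding T1_def by (rule sum.inter_filter[OF fin, symmetric])
  also have "\<dots> = (\<Sum>ks\<in>map Rr ` T1. G ks)"
  proof (rule sum.reindex[symmetric, unfolded o_def])
    show "inj_on (map Rr) T1" by (rule inj_onI) (metis map_RiRr(1))
  qed
  also have "map Rr ` T1 = S1"
  proof
    show "map Rr ` T1 \<subseteq> S1"
    proof
      fix ks assume "ks \<in> map Rr ` T1"
      then obtain js where js: "js \<in> T1" "ks = map Rr js" by blast
      then have "length ks = p" "set ks \<subseteq> U" "set (map Ri ks) \<subseteq> U" unfolding T1_def by auto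
      then show "ks \<in> S1" unfolding S1_def by blast
    qed
    show "S1 \<subseteq> map Rr ` T1"
    proof
      fix ks assume ks: "ks \<in> S1"
      then have "map Ri ks \<in> T1" unfolding S1_def T1_def by auto
      moreover have "ks = map Rr (map Ri ks)" by simp
      ultimately show "ks \<in> map Rr ` T1" by blast
    qed
  qed
  finally show ?thesis using R by (simp add: x_def y_def)
qed

end

theorem mainTheorem12:
  fixes l1 l2 n2 :: int and p :: nat and e ec e' ec' :: "nat \<Rightarrow> nat"
  assumes hl: "l1 > l2" "l2 > n2" "n2 > 0" "l1^2 = l2^2 + n2^2"
    and hp: "p \<ge> 1"
    and hm: "mdeg e ec = p" and hm': "mdeg e' ec' = p"
    and inv_m: "\<And>a b x. cnj (Ttr l1 l2 n2 a b x 0) * mono e ec (Ttr l1 l2 n2 a b x)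
                         = cnj (x 0) * mono e ec x"
    and inv_m': "\<And>a b x. cnj (Ttr l1 l2 n2 a b x 2) * mono e' ec' (Ttr l1 l2 n2 a b x)
                         = cnj (x 2) * mono e' ec' x"
  shows "(\<exists>P :: real^2 \<Rightarrow> (real^2) list \<Rightarrow> complex.
            (\<forall>g k ks. orthogonal_transformation g \<and> k \<in> circleA (of_int l1) \<and>
                 length ks = p \<and> set ks \<subseteq> circleA (of_int l1)
                 \<longrightarrow> P (g k) (map g ks) = P k ks)
          \<and> (\<forall>k ks. k \<in> circleA (of_int l1) \<and> length ks = p \<and> set ks \<subseteq> circleA (of_int l1)
                 \<and> k \<noteq> sum_list ks \<longrightarrow> P k ks = 0)
          \<and> (\<forall>x. mono e ec x + mono e ec (gamma3 x)
                 = (\<Sum>ks\<in>{ks. length ks = p \<and> set ks \<subseteq> Atil l1 l2 n2}.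
                      prod_list (map (acoef l1 l2 n2 x) ks) * P (vq1 l1) ks))
          \<and> (\<forall>x. mono e' ec' x
                 = (\<Sum>ks\<in>{ks. length ks = p \<and> set ks \<subseteq> Atil l1 l2 n2}.
                      prod_list (map (acoef l1 l2 n2 x) ks) * P (vp1 l2 n2) ks)))
     \<longleftrightarrow>
     (\<forall>z1 z2 w2 w3.
        mono e ec (mk6 z1 z2 0 w2 w3 0) + mono e ec (gamma3 (mk6 z1 z2 0 w2 w3 0))
        = mono e' ec' (mk6 w2 w3 z1 0 0 (cnj z2)))"
  proof -
  interpret pyth l1 l2 n2 using hl by unfold_locales auto
  have sL: "sum_list (Lst e ec) = mkv L1 0" using inv_sum[of 0 e ec] inv_m by (simp add: vv_def)
  have sL': "sum_list (Lst e' ec') = mkv L2 N2" using inv_sum[of 2 e' ec'] inv_m' by (simp add: vv_def)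
  show ?thesis
  proof
    assume "\<exists>P :: real^2 \<Rightarrow> (real^2) list \<Rightarrow> complex.
            (\<forall>g k ks. orthogonal_transformation g \<and> k \<in> circleA (of_int l1) \<and>
                 length ks = p \<and> set ks \<subseteq> circleA (of_int l1)
                 \<longrightarrow> P (g k) (map g ks) = P k ks)
          \<and> (\<forall>k ks. k \<in> circleA (of_int l1) \<and> length ks = p \<and> set ks \<subseteq> circleA (of_int l1)
                 \<and> k \<noteq> sum_list ks \<longrightarrow> P k ks = 0)
          \<and> (\<forall>x. mono e ec x + mono e ec (gamma3 x)
                 = (\<Sum>ks\<in>{ks. length ks = p \<and> set ks \<subseteq> Atil l1 l2 n2}.
                      prod_list (map (acoef l1 l2 n2 x) ks) * P (vq1 l1) ks))
          \<and> (\<forall>x. mono e' ec' x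
                 = (\<Sum>ks\<in>{ks. length ks = p \<and> set ks \<subseteq> Atil l1 l2 n2}.
                      prod_list (map (acoef l1 l2 n2 x) ks) * P (vp1 l2 n2) ks))"
    then obtain P :: "real^2 \<Rightarrow> (real^2) list \<Rightarrow> complex" where
      A: "\<forall>g k ks. orthogonal_transformation g \<and> k \<in> circleA L1 \<and> length ks = p \<and> set ks \<subseteq> circleA L1
                 \<longrightarrow> P (g k) (map g ks) = P k ks"
      and C: "\<forall>x. mono e ec x + mono e ec (gamma3 x) = (\<Sum>ks\<in>SS p. prod_list (map (ac x) ks) * P (vq1 l1) ks)"
      and D: "\<forall>x. mono e' ec' x = (\<Sum>ks\<in>SS p. prod_list (map (ac x) ks) * P (vp1 l2 n2) ks)"
      by blast
    show "\<forall>z1 z2 w2 w3.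
        mono e ec (mk6 z1 z2 0 w2 w3 0) + mono e ec (gamma3 (mk6 z1 z2 0 w2 w3 0))
        = mono e' ec' (mk6 w2 w3 z1 0 0 (cnj z2))"
      using fwd[OF A C D] by blast
  next
    assume H: "\<forall>z1 z2 w2 w3.
        mono e ec (mk6 z1 z2 0 w2 w3 0) + mono e ec (gamma3 (mk6 z1 z2 0 w2 w3 0))
        = mono e' ec' (mk6 w2 w3 z1 0 0 (cnj z2))"
    define Q where "Q = PP (Lst e ec) (Lst e' ec') (cc e' ec')"
    have i1: "\<forall>g k ks. orthogonal_transformation g \<and> k \<in> circleA L1 \<and> length ks = p \<and> set ks \<subseteq> circleA L1
                 \<longrightarrow> Q (g k) (map g ks) = Q k ks"
      unfolding Q_def using PP_inv by blast
    have i2: "\<forall>k ks. k \<in> circleA L1 \<and> length ks = p \<and> set ks \<subseteq> circleA L1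
                 \<and> k \<noteq> sum_list ks \<longrightarrow> Q k ks = 0"
      unfolding Q_def using PP_zero sL sL' by (auto simp: circleA_def)
    have i3: "\<forall>x. mono e ec x + mono e ec (gamma3 x) = (\<Sum>ks\<in>SS p. prod_list (map (ac x) ks) * Q (vq1 l1) ks)"
      unfolding Q_def using eq1[OF hm] by blast
    have i4: "\<forall>x. mono e' ec' x = (\<Sum>ks\<in>SS p. prod_list (map (ac x) ks) * Q (vp1 l2 n2) ks)"
      unfolding Q_def using eq2[OF hm hm' H] by blast
    show "\<exists>P :: real^2 \<Rightarrow> (real^2) list \<Rightarrow> complex.
            (\<forall>g k ks. orthogonal_transformation g \<and> k \<in> circleA (of_int l1) \<and>
                 length ks = p \<and> set ks \<subseteq> circleA (of_int l1)
                 \<longrightarrow> P (g k) (map g ks) = P k ks)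
          \<and> (\<forall>k ks. k \<in> circleA (of_int l1) \<and> length ks = p \<and> set ks \<subseteq> circleA (of_int l1)
                 \<and> k \<noteq> sum_list ks \<longrightarrow> P k ks = 0)
          \<and> (\<forall>x. mono e ec x + mono e ec (gamma3 x)
                 = (\<Sum>ks\<in>{ks. length ks = p \<and> set ks \<subseteq> Atil l1 l2 n2}.
                      prod_list (map (acoef l1 l2 n2 x) ks) * P (vq1 l1) ks))
          \<and> (\<forall>x. mono e' ec' x
                 = (\<Sum>ks\<in>{ks. length ks = p \<and> set ks \<subseteq> Atil l1 l2 n2}.
                      prod_list (map (acoef l1 l2 n2 x) ks) * P (vp1 l2 n2) ks))"
      using i1 i2 i3 i4 by blast
  qed
qed

end
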